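(* For every BIMS channel with capacity $C$ and every rate $R\ge0$, the random coding exponent satisfies $$E_{\rm r}^{\rm bsc}(R;C)\le E_{\rm r}(R)\le E_{\rm r}^{\rm bec}(R;C).$$
   Context: A BIMS (binary-input memoryless symmetric) channel is a memoryless channel with input alphabet $\{x_0,x_1\}$, finite output alphabet $\mathcal Y$ and transition probabilities $P_{Y|X}(y|x)$. It is symmetric in Gallager's sense: the columns of the $2\times|\mathcal Y|$ transition matrix (rows indexed by inputs) can be partitioned into submatrices such that, in each submatrix, every row is a permutation of every other row and every column is a permutation of every other column. Inputs are equiprobable and logarithms are base 2. The capacity $C$ is $I(X;Y)$ under equiprobable inputs. For $\rho>-1$, $$F(\rho)=\sum_{x}\tfrac12\sum_{y:\,P_{Y|X}(y|x)>0}P_{Y|X}(y|x)\left(\frac{\tfrac12\sum_{x'}P_{Y|X}(y|x')^{1/(1+\rho)}}{P_{Y|X}(y|x)^{1/(1+\rho)}}\right)^{\rho},$$ and $E_0(\rho)=-\log F(\rho)$. The random coding exponent is $E_{\rm r}(R)=\max_{0\le\rho\le1}\bigl(E_0(\rho)-\rho R\bigr)$. $h$ is the binary entropy function and $h^{-1}$ its inverse on $[0,\tfrac12]$. Define $$F^{\rm bec}(\rho;C)=1+(2^{-\rho}-1)C,$$ $$F^{\rm bsc}(\rho;C)=2^{-\rho}\bigl(\varepsilon^{1/(1+\rho)}+(1-\varepsilon)^{1/(1+\rho)}\bigr)^{1+\rho},\qquad \varepsilon=h^{-1}(1-C).$$ Then $$E_{\rm r}^{\rm bec}(R;C)=\max_{0\le\rho\le1}\bigl(-\log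 F^{\rm bec}(\rho;C)-\rho R\bigr),\qquad E_{\rm r}^{\rm bsc}(R;C)=\max_{0\le\rho\le1}\bigl(-\log F^{\rm bsc}(\rho;C)-\rho R\bigr)$$ are the random coding exponents of the BEC and of the BSC of capacity $C$. *)

theory Defs
  imports Complex_Main
begin

text \<open>A binary-input channel with finite output alphabet 'y.  The input alphabet
  {x0, x1} is represented by bool (x0 = False, x1 = True); W x y = P(y|x).\<close>

definition stochastic_channel :: "(bool \<Rightarrow> 'y::finite \<Rightarrow> real) \<Rightarrow> bool" where
  "stochastic_channel W \<longleftrightarrow> (\<forall>x y. W x y \<ge> 0) \<and> (\<forall>x. (\<Sum>y\<in>UNIV. W x y) = 1)"

definition gallager_symmetric :: "(bool \<Rightarrow> 'y::finite \<Rightarrow> real) \<Rightarrow> bool" where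
  "gallager_symmetric W \<longleftrightarrow>
     (\<exists>P :: 'y set set.
        \<Union>P = UNIV \<and> (\<forall>B\<in>P. B \<noteq> {}) \<and>
        (\<forall>B\<in>P. \<forall>B'\<in>P. B \<noteq> B' \<longrightarrow> B \<inter> B' = {}) \<and>
        (\<forall>B\<in>P.
           (\<forall>x x'. \<exists>\<sigma>. bij_betw \<sigma> B B \<and> (\<forall>y\<in>B. W x' (\<sigma> y) = W x y)) \<and>
           (\<forall>y\<in>B. \<forall>y'\<in>B. \<exists>\<pi>. bij \<pi> \<and> (\<forall>x. W x y' = W (\<pi> x) y))))"

definition bims :: "(bool \<Rightarrow> 'y::finite \<Rightarrow> real) \<Rightarrow> bool" where
  "bims W \<longleftrightarrow> stochastic_channel W \<and> gallager_symmetric W"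

text \<open>Capacity = I(X;Y) under equiprobable inputs (base-2 logarithms).\<close>
definition capacity :: "(bool \<Rightarrow> 'y::finite \<Rightarrow> real) \<Rightarrow> real" where
  "capacity W = (\<Sum>x\<in>UNIV. 1/2 * (\<Sum>y\<in>{y. W x y > 0}.
       W x y * log 2 (W x y / ((1/2) * (\<Sum>x'\<in>UNIV. W x' y)))))"

definition gallager_F :: "(bool \<Rightarrow> 'y::finite \<Rightarrow> real) \<Rightarrow> real \<Rightarrow> real" where
  "gallager_F W \<rho> = (\<Sum>x\<in>UNIV. 1/2 * (\<Sum>y\<in>{y. W x y > 0}.
       W x y * (((1/2) * (\<Sum>x'\<in>UNIV. W x' y powr (1/(1+\<rho>)))) / (W x y powr (1/(1+\<rho>)))) powr \<rho>))"

definition E0 :: "(bool \<Rightarrow> 'y::finite \<Rightarrow> real) \<Rightarrow> real \<Rightarrow> real" where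
  "E0 W \<rho> = - log 2 (gallager_F W \<rho>)"

definition Er :: "(bool \<Rightarrow> 'y::finite \<Rightarrow> real) \<Rightarrow> real \<Rightarrow> real" where
  "Er W R = (SUP \<rho>\<in>{0..1}. E0 W \<rho> - \<rho> * R)"

definition bin_entropy :: "real \<Rightarrow> real" where
  "bin_entropy p = - p * log 2 p - (1 - p) * log 2 (1 - p)"

definition bin_entropy_inv :: "real \<Rightarrow> real" where
  "bin_entropy_inv z = (THE p. p \<in> {0..1/2} \<and> bin_entropy p = z)"

definition F_bec :: "real \<Rightarrow> real \<Rightarrow> real" where
  "F_bec \<rho> C = 1 + (2 powr (-\<rho>) - 1) * C"

definition F_bsc :: "real \<Rightarrow> real \<Rightarrow> real" where
  "F_bsc \<rho> C = (let \<epsilon> = bin_entropy_inv (1 - C) in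
     2 powr (-\<rho>) * (\<epsilon> powr (1/(1+\<rho>)) + (1 - \<epsilon>) powr (1/(1+\<rho>))) powr (1+\<rho>))"

definition Er_bec :: "real \<Rightarrow> real \<Rightarrow> real" where
  "Er_bec R C = (SUP \<rho>\<in>{0..1}. - log 2 (F_bec \<rho> C) - \<rho> * R)"

definition Er_bsc :: "real \<Rightarrow> real \<Rightarrow> real" where
  "Er_bsc R C = (SUP \<rho>\<in>{0..1}. - log 2 (F_bsc \<rho> C) - \<rho> * R)"

end

theory Submission
  imports Defs
begin

lemma ep_pos[simp]: "0 < 1 + exp (x::real)" by (simp add: add_pos_pos)
lemma ep_ne[simp]: "1 + exp (x::real) \<noteq> 0" using ep_pos[of x] by linarith

definition Pf :: "real \<Rightarrow> real \<Rightarrow> real" where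
  "Pf r x = exp (r * ln (1 + exp (x/(1+r))))"
definition Gf :: "real \<Rightarrow> real \<Rightarrow> real" where
  "Gf r x = exp ((1+r) * ln (1 + exp (x/(1+r)))) / (1 + exp x)"
definition Hn :: "real \<Rightarrow> real" where
  "Hn x = ln (1 + exp x) - x * exp x / (1 + exp x)"
definition Lam :: "real \<Rightarrow> real \<Rightarrow> real" where
  "Lam r x = Pf r x * (1 - exp (- (r/(1+r)) * x)) / x"

lemma Gf_Pf: "r \<ge> 0 \<Longrightarrow> Gf r x = Pf r x * (1 + exp (x/(1+r))) / (1 + exp x)"
  unfolding Gf_def Pf_def
  by (simp add: distrib_right exp_add algebra_simps)

lemma frac_aux: "(d::real) \<noteq> 0 \<Longrightarrow> a/d - b/d^2 = (a*d - b)/d^2"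
  by (simp add: power2_eq_square diff_divide_distrib)

lemma deriv_Hn: "(Hn has_real_derivative (- x * exp x / (1 + exp x)^2)) (at x)"
proof -
  have "(Hn has_real_derivative (exp x/(1+exp x) - ((exp x + x*exp x)*(1+exp x) - x*exp x*exp x)/(1+exp x)^2)) (at x)"
    unfolding Hn_def[abs_def] by (auto intro!: derivative_eq_intros simp: power2_eq_square)
  moreover have "e/(1+e) - ((e + x*e)*(1+e) - x*e*e)/(1+e)^2 = - x * e / (1 + e)^2" if "1+e \<noteq> 0" for e::real
    using that by (simp add: frac_aux) (simp add: algebra_simps)
  ultimately show ?thesis by simp
qed

lemma deriv_N: assumes "r \<ge> 0"
  shows "((\<lambda>x. exp ((1+r) * ln (1 + exp (x/(1+r))))) has_real_derivative (Pf r x * exp (x/(1+r)))) (at x)"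
proof -
  have r1: "1 + r \<noteq> 0" using assms by linarith
  have e: "exp ((1+r) * ln (1 + exp (x/(1+r)))) = Pf r x * (1 + exp (x/(1+r)))"
    unfolding Pf_def by (simp add: distrib_right exp_add algebra_simps)
  have q: "exp ((1+r) * ln (1 + exp (x/(1+r)))) * exp (x/(1+r)) / (1 + exp (x/(1+r))) = Pf r x * exp (x/(1+r))"
    unfolding e by simp
  show ?thesis
    using r1 by (auto intro!: derivative_eq_intros simp: q)
qed

lemma deriv_Gf: assumes "r \<ge> 0"
  shows "(Gf r has_real_derivative (Pf r x * (exp (x/(1+r)) - exp x) / (1 + exp x)^2)) (at x)"
proof -
  have e: "exp ((1+r) * ln (1 + exp (x/(1+r)))) = Pf r x * (1 + exp (x/(1+r)))"
    unfolding Pf_def by (simp add: distrib_right exp_add algebra_simps)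
  have "(Gf r has_real_derivative ((Pf r x * exp (x/(1+r)) * (1 + exp x) - exp ((1+r) * ln (1 + exp (x/(1+r)))) * exp x) / (1 + exp x)^2)) (at x)"
    unfolding Gf_def[abs_def] power2_eq_square
    by (rule DERIV_divide[OF deriv_N[OF assms]]) (auto intro!: derivative_eq_intros)
  moreover have "(Pf r x * exp (x/(1+r)) * (1 + exp x) - exp ((1+r) * ln (1 + exp (x/(1+r)))) * exp x)
     = Pf r x * (exp (x/(1+r)) - exp x)" unfolding e by (simp add: algebra_simps)
  ultimately show ?thesis by simp
qed

lemma Pf_pos: "Pf r x > 0" unfolding Pf_def by simp

lemma G_Lam: assumes "r \<ge> 0"
  shows "Pf r x * (exp (x/(1+r)) - exp x) = - x * exp x * Lam r x"
proof (cases "x = 0")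
  case True then show ?thesis by (simp add: Lam_def)
next
  case False
  have r1: "1 + r \<noteq> 0" using assms by linarith
  have "exp x * exp (- (r/(1+r)) * x) = exp (x/(1+r))"
    unfolding exp_add[symmetric] using r1 by (simp add: field_simps)
  then show ?thesis using False unfolding Lam_def by (simp add: field_simps)
qed

lemma ineqL: assumes "y \<ge> (0::real)" shows "2 * (1 - exp (-y)) \<le> y * (1 + exp (-y))"
proof -
  define k :: "real \<Rightarrow> real" where "k y = y * (1 + exp (-y)) - 2 * (1 - exp (-y))" for y
  have "k 0 \<le> k y"
  proof (rule DERIV_nonneg_imp_nondecreasing[OF assms])
    fix t assume t: "0 \<le> t" "t \<le> y"
    have d: "(k has_real_derivative (1 - exp (-t) - t * exp (-t))) (at t)"
      unfolding k_def[abs_def] by (auto intro!: derivative_eq_intros simp: algebra_simps)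
    have "1 + t \<le> exp t" by (rule exp_ge_add_one_self)
    then have "(1 + t) * exp (-t) \<le> exp t * exp (-t)" by (simp add: mult_right_mono)
    then have "(1 + t) * exp (-t) \<le> 1" by (simp add: exp_minus)
    then have "0 \<le> 1 - exp (-t) - t * exp (-t)" by (simp add: algebra_simps)
    with d show "\<exists>y. (k has_real_derivative y) (at t) \<and> 0 \<le> y" by blast
  qed
  then show ?thesis by (simp add: k_def)
qed

lemma deriv_Pf: assumes "r \<ge> 0"
  shows "(Pf r has_real_derivative (Pf r x * (r/(1+r) * exp (x/(1+r)) / (1 + exp (x/(1+r)))))) (at x)"
proof -
  have r1: "1 + r \<noteq> 0" using assms by linarith
  show ?thesis unfolding Pf_def[abs_def]
    using r1 by (auto intro!: derivative_eq_intros simp: mult_ac)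
qed

lemma deriv_Lam: assumes "r \<ge> 0" "x \<noteq> 0"
  shows "(Lam r has_real_derivative
    (Pf r x * (((r/(1+r)) * exp (x/(1+r)) / (1 + exp (x/(1+r))) * (1 - exp (- (r/(1+r)) * x))
       + (r/(1+r)) * exp (- (r/(1+r)) * x)) * x - (1 - exp (- (r/(1+r)) * x))) / (x * x))) (at x)"
proof -
  define b where "b = r/(1+r)"
  have d1: "((\<lambda>x. 1 - exp (- b * x)) has_real_derivative (b * exp (- b * x))) (at x)"
    by (auto intro!: derivative_eq_intros)
  have d2: "((\<lambda>x. Pf r x * (1 - exp (- b * x))) has_real_derivative
      (Pf r x * (b * exp (x/(1+r)) / (1 + exp (x/(1+r)))) * (1 - exp (- b * x)) + Pf r x * (b * exp (- b * x)))) (at x)"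
    using DERIV_mult[OF deriv_Pf[OF assms(1)] d1] unfolding b_def by (simp add: mult_ac)
  have d3: "((\<lambda>x. x) has_real_derivative 1) (at x)" by (rule DERIV_ident)
  have "Lam r = (\<lambda>x. Pf r x * (1 - exp (- b * x)) / x)"
    unfolding Lam_def b_def by auto
  then show ?thesis
    using DERIV_divide[OF d2 d3 assms(2)] unfolding b_def[symmetric]
    by (simp add: algebra_simps)
qed

lemma Lam_nonneg: assumes "r \<ge> 0" "x \<ge> 0" shows "Lam r x \<ge> 0"
proof -
  have "exp (- (r/(1+r)) * x) \<le> 1" using assms by (simp add: mult_nonneg_nonneg)
  then show ?thesis unfolding Lam_def using assms Pf_pos[of r x]
    by (simp add: mult_nonneg_nonneg)
qed

lemma lin_aux: "(1/2)*(y*(1-F)) \<le> (Q::real) \<Longrightarrow> 2*(1-F) \<le> y*(1+F) \<Longrightarrow> 0 \<le> Q + y*F - (1-F)"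
  by (simp add: algebra_simps)

lemma Lam_deriv_nonneg: assumes r: "r \<ge> 0" and t: "t > 0"
  shows "0 \<le> Pf r t * (((r/(1+r)) * exp (t/(1+r)) / (1 + exp (t/(1+r))) * (1 - exp (- (r/(1+r)) * t))
       + (r/(1+r)) * exp (- (r/(1+r)) * t)) * t - (1 - exp (- (r/(1+r)) * t))) / (t * t)"
proof -
  define b where "b = r/(1+r)"
  define E where "E = exp (t/(1+r))"
  define F where "F = exp (- (r/(1+r)) * t)"
  have b0: "b \<ge> 0" using r by (simp add: b_def)
  have y0: "b * t \<ge> 0" using b0 t by simp
  have F: "F = exp (- (b*t))" unfolding F_def b_def by simp
  have F1: "F \<le> 1" unfolding F using y0 by simp
  have E1: "E \<ge> 1" unfolding E_def using r t by simp
  have EE: "E / (1 + E) \<ge> 1/2" using E1 by (simp add: field_simps)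
  have nn: "b * t * (1 - F) \<ge> 0" using y0 F1 by simp
  have "(1/2) * (b * t * (1 - F)) \<le> E / (1 + E) * (b * t * (1 - F))"
    by (rule mult_right_mono[OF EE nn])
  moreover have "2 * (1 - F) \<le> (b*t) * (1 + F)" unfolding F by (rule ineqL[OF y0])
  moreover have "(b * E / (1 + E) * (1 - F) + b * F) * t - (1 - F)
      = E / (1 + E) * (b * t * (1 - F)) + (b*t) * F - (1 - F)"
    by (simp add: algebra_simps add_divide_distrib[symmetric])
  ultimately have "0 \<le> (b * E / (1 + E) * (1 - F) + b * F) * t - (1 - F)"
    using lin_aux by metis
  then show ?thesis
    unfolding F_def[symmetric] E_def[symmetric] b_def[symmetric]
    using Pf_pos[of r t] t by (intro divide_nonneg_pos mult_nonneg_nonneg) (auto simp: F[symmetric])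
qed

lemma Lam_mono: assumes r: "r \<ge> 0" and x: "0 \<le> x1" "x1 \<le> x2"
  shows "Lam r x1 \<le> Lam r x2"
proof (cases "x1 = 0")
  case True then show ?thesis using Lam_nonneg[OF r, of x2] x by (simp add: Lam_def)
next
  case False
  then have x1p: "x1 > 0" using x by simp
  show ?thesis
  proof (rule DERIV_nonneg_imp_nondecreasing[OF x(2)])
    fix t assume "x1 \<le> t" "t \<le> x2"
    then have tp: "t > 0" using x1p by simp
    show "\<exists>y. (Lam r has_real_derivative y) (at t) \<and> 0 \<le> y"
      using deriv_Lam[OF r, of t] Lam_deriv_nonneg[OF r tp] tp by auto
  qed
qed

lemma deriv_D: assumes r: "r \<ge> 0"
  shows "((\<lambda>t. Gf r t - k * Hn t) has_real_derivative (t * exp t * (k - Lam r t) / (1 + exp t)^2)) (at t)"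
proof -
  have "((\<lambda>t. Gf r t - k * Hn t) has_real_derivative
     (Pf r t * (exp (t/(1+r)) - exp t) / (1 + exp t)^2 - k * (- t * exp t / (1 + exp t)^2))) (at t)"
    by (intro DERIV_diff DERIV_cmult deriv_Gf[OF r] deriv_Hn)
  moreover have "Pf r t * (exp (t/(1+r)) - exp t) / (1 + exp t)^2 - k * (- t * exp t / (1 + exp t)^2)
     = t * exp t * (k - Lam r t) / (1 + exp t)^2"
    unfolding G_Lam[OF r] by (simp add: algebra_simps add_divide_distrib[symmetric] diff_divide_distrib[symmetric])
  ultimately show ?thesis by simp
qed

lemma tangent: assumes r: "r \<ge> 0" and x0: "x0 \<ge> 0" and x: "x \<ge> 0"
  shows "Gf r x - Lam r x0 * Hn x \<le> Gf r x0 - Lam r x0 * Hn x0"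
proof (cases "x \<le> x0")
  case True
  show ?thesis
  proof (rule DERIV_nonneg_imp_nondecreasing[OF True, of "\<lambda>t. Gf r t - Lam r x0 * Hn t"])
    fix t assume t: "x \<le> t" "t \<le> x0"
    have "Lam r t \<le> Lam r x0" using Lam_mono[OF r _ t(2)] t x by simp
    then have "0 \<le> t * exp t * (Lam r x0 - Lam r t) / (1 + exp t)^2" using t x by simp
    then show "\<exists>y. ((\<lambda>t. Gf r t - Lam r x0 * Hn t) has_real_derivative y) (at t) \<and> 0 \<le> y"
      using deriv_D[OF r] by blast
  qed
next
  case False
  then have le: "x0 \<le> x" by simp
  show ?thesis
  proof (rule DERIV_nonpos_imp_nonincreasing[OF le, of "\<lambda>t. Gf r t - Lam r x0 * Hn t"])
    fix t assume t: "x0 \<le> t" "t \<le> x"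
    have "Lam r x0 \<le> Lam r t" using Lam_mono[OF r x0 t(1)] .
    then have "t * exp t * (Lam r x0 - Lam r t) / (1 + exp t)^2 \<le> 0" using t x0
      by (intro divide_nonpos_pos mult_nonneg_nonpos) auto
    then show "\<exists>y. ((\<lambda>t. Gf r t - Lam r x0 * Hn t) has_real_derivative y) (at t) \<and> y \<le> 0"
      using deriv_D[OF r] by blast
  qed
qed

lemma Hn_alt: "Hn x = ln (1 + exp (-x)) + x / (1 + exp x)"
proof -
  have "1 + exp x = exp x * (1 + exp (-x))" by (simp add: algebra_simps exp_minus)
  then have "ln (1 + exp x) = x + ln (1 + exp (-x))" by (simp add: ln_mult add_pos_pos)
  moreover have "x - x * exp x / (1 + exp x) = x / (1 + exp x)"
    by (simp add: field_simps)
  ultimately show ?thesis unfolding Hn_def by simp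
qed

lemma lim_exp_neg: assumes c: "(c::real) > 0" shows "((\<lambda>x::real. exp (- (c * x))) \<longlongrightarrow> 0) at_top"
proof -
  have "LIM x at_top. c * x :> at_top"
    by (rule filterlim_tendsto_pos_mult_at_top[OF tendsto_const c filterlim_ident])
  then have "LIM x at_top. exp (c * x) :> at_top" by (rule filterlim_compose[OF exp_at_top])
  then have "((\<lambda>x. inverse (exp (c * x))) \<longlongrightarrow> 0) at_top" by (rule tendsto_inverse_0_at_top)
  then show ?thesis by (simp add: exp_minus)
qed

lemma lim_frac1: "((\<lambda>x::real. exp x / (1 + exp x)) \<longlongrightarrow> (1::real)) at_top"
proof -
  have eq: "exp x / (1 + exp x) = 1 / (1 + exp (- (1 * x)))" for x :: real
    by (simp add: exp_minus field_simps)
  have "((\<lambda>x::real. 1 / (1 + exp (- (1 * x)))) \<longlongrightarrow> 1 / (1 + 0)) at_top"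
    by (intro tendsto_intros lim_exp_neg) auto
  then show ?thesis unfolding eq by simp
qed

lemma Hn_lim: "(Hn \<longlongrightarrow> 0) at_top"
proof -
  have eq: "Hn x = ln (1 + exp (- x)) + (x ^ 1 / exp x) * (exp x / (1 + exp x))" for x
    unfolding Hn_alt by simp
  have e1: "((\<lambda>x::real. exp (- x)) \<longlongrightarrow> 0) at_top" using lim_exp_neg[of 1] by simp
  have t1: "((\<lambda>x::real. ln (1 + exp (- x))) \<longlongrightarrow> ln (1 + 0)) at_top"
    by (intro tendsto_ln tendsto_add tendsto_const e1) simp
  have t2: "((\<lambda>x::real. (x ^ 1 / exp x) * (exp x / (1 + exp x))) \<longlongrightarrow> 0 * 1) at_top"
    by (intro tendsto_mult tendsto_power_div_exp_0 lim_frac1)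
  have "((\<lambda>x::real. ln (1 + exp (- x)) + (x ^ 1 / exp x) * (exp x / (1 + exp x))) \<longlongrightarrow> ln (1 + 0) + 0 * 1) at_top"
    by (rule tendsto_add[OF t1 t2])
  then show ?thesis unfolding eq[abs_def] by simp
qed

lemma Gf_lim: assumes r: "r \<ge> 0" shows "(Gf r \<longlongrightarrow> 1) at_top"
proof -
  have r1: "1 + r > 0" using r by simp
  have l1: "((\<lambda>x. exp (- (x/(1+r)))) \<longlongrightarrow> 0) at_top"
    using lim_exp_neg[of "1/(1+r)"] r1 by simp
  have l2: "((\<lambda>x::real. exp x / (1 + exp x)) \<longlongrightarrow> (1::real)) at_top" by (rule lim_frac1)
  have l3: "((\<lambda>x. exp ((1+r) * ln (1 + exp (- (x/(1+r)))))) \<longlongrightarrow> exp ((1+r) * ln (1 + 0))) at_top"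
    by (intro tendsto_intros l1) auto
  have eq: "Gf r x = exp ((1+r) * ln (1 + exp (- (x/(1+r))))) * (exp x / (1 + exp x))" for x
  proof -
    have "1 + exp (x/(1+r)) = exp (x/(1+r)) * (1 + exp (- (x/(1+r))))"
      by (simp add: algebra_simps exp_minus)
    then have "ln (1 + exp (x/(1+r))) = x/(1+r) + ln (1 + exp (- (x/(1+r))))"
      by (simp add: ln_mult add_pos_pos)
    moreover have "(1+r) * (x/(1+r)) = x" using r1 by simp
    ultimately have "(1+r) * ln (1 + exp (x/(1+r))) = x + (1+r) * ln (1 + exp (- (x/(1+r))))"
      by (simp add: distrib_left)
    then show ?thesis unfolding Gf_def by (simp add: exp_add)
  qed
  show ?thesis unfolding eq using tendsto_mult[OF l3 l2] by simp
qed

lemma tangent_inf: assumes r: "r \<ge> 0" and x0: "x0 \<ge> 0"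
  shows "1 \<le> Gf r x0 - Lam r x0 * Hn x0"
proof -
  have lim: "((\<lambda>x. Gf r x - Lam r x0 * Hn x) \<longlongrightarrow> 1 - Lam r x0 * 0) at_top"
    by (intro tendsto_intros Gf_lim[OF r] Hn_lim)
  have ev: "eventually (\<lambda>x. Gf r x - Lam r x0 * Hn x \<le> Gf r x0 - Lam r x0 * Hn x0) at_top"
    using eventually_ge_at_top[of x0] by eventually_elim (use tangent[OF r x0] x0 in auto)
  show ?thesis using tendsto_le[OF trivial_limit_at_top_linorder tendsto_const lim ev] by simp
qed

lemma Hn_pos: "x \<ge> 0 \<Longrightarrow> Hn x > 0"
  unfolding Hn_alt by (intro add_pos_nonneg) auto

lemma Hn_0: "Hn 0 = ln 2" unfolding Hn_def by simp

lemma Hn_le: assumes "x \<ge> 0" shows "Hn x \<le> ln 2"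
proof -
  have "Hn x \<le> Hn 0"
  proof (rule DERIV_nonpos_imp_nonincreasing[OF assms])
    fix t assume "0 \<le> t" "t \<le> x"
    then show "\<exists>y. (Hn has_real_derivative y) (at t) \<and> y \<le> 0"
      using deriv_Hn[of t] by (intro exI[of _ "- t * exp t / (1 + exp t)^2"]) auto
  qed
  then show ?thesis by (simp add: Hn_0)
qed

lemma Gf_0: "Gf r 0 = 2 powr r"
proof -
  have "exp ((1+r) * ln 2) = 2 powr (1+r)" by (simp add: powr_def)
  then show ?thesis unfolding Gf_def by (simp add: powr_add)
qed

lemma per_unit:
  assumes r: "r \<ge> 0" and x: "x \<ge> 0" and x0: "x0 \<ge> 0"
  defines "h \<equiv> Hn x / ln 2"
  shows "0 < h" "h \<le> 1"
    "h + (1 - h) * 2 powr (-r) \<le> 2 powr (-r) * Gf r x"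
    "2 powr (-r) * Gf r x \<le> 2 powr (-r) * (Gf r x0 - Lam r x0 * Hn x0) + 2 powr (-r) * Lam r x0 * ln 2 * h"
proof -
  have l2: "ln (2::real) > 0" by simp
  show h0: "0 < h" unfolding h_def using Hn_pos[OF x] l2 by simp
  show h1: "h \<le> 1" unfolding h_def using Hn_le[OF x] l2 by simp
  have Hx: "Hn x = ln 2 * h" unfolding h_def using l2 by simp
  define k where "k = Lam r x"
  have t1: "2 powr r - k * ln 2 \<le> Gf r x - k * Hn x"
    using tangent[OF r x order_refl] unfolding k_def Gf_0 Hn_0 by simp
  have t2: "1 \<le> Gf r x - k * Hn x" using tangent_inf[OF r x] unfolding k_def .
  have "h * (2 powr r - k * ln 2) + (1 - h) * 1 \<le> h * (Gf r x - k * Hn x) + (1 - h) * (Gf r x - k * Hn x)"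
    using h0 h1 t1 t2 by (intro add_mono mult_left_mono) auto
  then have "h * 2 powr r + (1 - h) \<le> Gf r x" unfolding Hx by (simp add: algebra_simps)
  then have "2 powr (-r) * (h * 2 powr r + (1 - h)) \<le> 2 powr (-r) * Gf r x"
    by (intro mult_left_mono) auto
  moreover have "2 powr (-r) * 2 powr r = (1::real)" by (simp add: powr_add[symmetric])
  ultimately show "h + (1 - h) * 2 powr (-r) \<le> 2 powr (-r) * Gf r x"
    by (simp add: algebra_simps)
  have "Gf r x \<le> Gf r x0 - Lam r x0 * Hn x0 + Lam r x0 * Hn x"
    using tangent[OF r x0 x] by simp
  then have "2 powr (-r) * Gf r x \<le> 2 powr (-r) * (Gf r x0 - Lam r x0 * Hn x0 + Lam r x0 * Hn x)"
    by (intro mult_left_mono) auto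
  then show "2 powr (-r) * Gf r x \<le> 2 powr (-r) * (Gf r x0 - Lam r x0 * Hn x0) + 2 powr (-r) * Lam r x0 * ln 2 * h"
    unfolding Hx by (simp add: algebra_simps)
qed

definition Tf :: "real \<Rightarrow> real \<Rightarrow> real \<Rightarrow> real" where
  "Tf r a b = 1/2 * (if a > 0 then a * ((1/2 * (a powr (1/(1+r)) + b powr (1/(1+r)))) / a powr (1/(1+r))) powr r else 0)
            + 1/2 * (if b > 0 then b * ((1/2 * (a powr (1/(1+r)) + b powr (1/(1+r)))) / b powr (1/(1+r))) powr r else 0)"

definition Kf :: "real \<Rightarrow> real \<Rightarrow> real" where
  "Kf a b = 1/2 * (if a > 0 then a * log 2 (a / (1/2 * (a + b))) else 0)
          + 1/2 * (if b > 0 then b * log 2 (b / (1/2 * (a + b))) else 0)"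

lemma Tf_sym: "Tf r a b = Tf r b a" unfolding Tf_def by (simp add: algebra_simps)
lemma Kf_sym: "Kf a b = Kf b a" unfolding Kf_def by (simp add: algebra_simps)

lemma pow_step1: fixes a A r :: real assumes "a > 0" "A > 0" "r \<ge> 0"
  shows "a * (A / a powr (1/(1+r))) powr r = a powr (1/(1+r)) * A powr r"
proof -
  have r1: "1 + r \<noteq> 0" using assms(3) by simp
  have "(A / a powr (1/(1+r))) powr r = A powr r / a powr (r/(1+r))"
    using assms by (simp add: powr_divide powr_powr)
  moreover have "a / a powr (r/(1+r)) = a powr (1/(1+r))"
  proof -
    have "a / a powr (r/(1+r)) = a powr (1 - r/(1+r))" using assms by (simp add: powr_diff)
    moreover have "1 - r/(1+r) = 1/(1+r)" using r1 by (simp add: field_simps)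
    ultimately show ?thesis by simp
  qed
  ultimately show ?thesis by (metis mult.commute times_divide_eq_right)
qed

lemma Tf_pos: assumes a: "a > 0" and b: "b > 0" and r: "r \<ge> 0"
  shows "Tf r a b = ((a + b) / 2) * 2 powr (-r) * Gf r (ln a - ln b)"
proof -
  define s where "s = 1/(1+r)"
  define x where "x = ln a - ln b"
  define E where "E = exp (x/(1+r))"
  define A where "A = 1/2 * (a powr s + b powr s)"
  have A0: "A > 0" unfolding A_def using a b by (simp add: add_pos_pos)
  have "Tf r a b = 1/2 * (a powr s * A powr r) + 1/2 * (b powr s * A powr r)"
    unfolding Tf_def using a b pow_step1[OF a A0 r] pow_step1[OF b A0 r] by (simp add: s_def A_def)
  also have "\<dots> = A powr r * A" unfolding A_def by (simp add: algebra_simps)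
  also have "\<dots> = A powr (1+r)" using A0 by (simp add: powr_add)
  finally have T1: "Tf r a b = A powr (1+r)" .
  have ea: "a = b * exp x" unfolding x_def using a b by (simp add: exp_diff)
  have "a powr s = b powr s * exp x powr s" unfolding ea using b by (simp add: powr_mult)
  moreover have "exp x powr s = E" unfolding E_def s_def by (simp add: powr_def)
  ultimately have AE: "A = b powr s * ((1 + E) / 2)" unfolding A_def by (simp add: algebra_simps)
  have "A powr (1+r) = (b powr s * ((1 + E) / 2)) powr (1+r)" unfolding AE ..
  also have "\<dots> = (b powr s) powr (1+r) * ((1 + E)/2) powr (1+r)"
    by (rule powr_mult)
  also have "(b powr s) powr (1+r) = b" using b r unfolding s_def by (simp add: powr_powr)
  also have "((1 + E)/2) powr (1+r) = (1 + E) powr (1+r) / (2 * 2 powr r)"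
    by (simp add: powr_divide E_def add_pos_pos powr_add)
  finally have T2: "Tf r a b = b * ((1 + E) powr (1+r) / (2 * 2 powr r))" using T1 by simp
  have G: "Gf r x = (1 + E) powr (1+r) / (1 + exp x)"
    unfolding Gf_def E_def by (simp add: powr_def add_pos_pos)
  have ex: "1 + exp x = (a + b) / b" using ea b by (simp add: field_simps)
  have gen: "((a + b) / 2) * (1 / Q) * (P / ((a + b) / b)) = b * (P / (2 * Q))" if "Q > 0" for P Q :: real
  proof -
    have ab: "a + b \<noteq> 0" using a b by simp
    have "((a + b) / 2) * (1 / Q) * (P / ((a + b) / b)) = ((a + b) / (a + b)) * (b * (P / (2 * Q)))"
      by (simp add: divide_simps)
    then show ?thesis using ab by simp
  qed
  have "((a + b) / 2) * 2 powr (-r) * Gf r x = b * ((1 + E) powr (1+r) / (2 * 2 powr r))"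
    unfolding G ex powr_minus_divide by (rule gen) simp
  then show ?thesis using T2 x_def by simp
qed

lemma Kf_pos: assumes a: "a > 0" and b: "b > 0"
  shows "Kf a b = ((a + b) / 2) * (1 - Hn (ln a - ln b) / ln 2)"
proof -
  have ab: "a + b > 0" using a b by simp
  have la: "ln (a / (1/2 * (a + b))) = ln 2 + ln a - ln (a + b)"
    using a ab by (simp add: ln_div ln_mult)
  have lb: "ln (b / (1/2 * (a + b))) = ln 2 + ln b - ln (a + b)"
    using b ab by (simp add: ln_div ln_mult)
  have K: "Kf a b = 1/2 * (a * ((ln 2 + ln a - ln (a + b)) / ln 2)) + 1/2 * (b * ((ln 2 + ln b - ln (a + b)) / ln 2))"
    unfolding Kf_def log_def using a b la lb by simp
  have ex: "exp (ln a - ln b) = a / b" using a b by (simp add: exp_diff)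
  have e1: "1 + a / b = (a + b) / b" using b by (simp add: field_simps)
  have q: "(a / b) / ((a + b) / b) = a / (a + b)" using b by simp
  have H: "Hn (ln a - ln b) = ln (a + b) - ln b - (ln a - ln b) * (a / (a + b))"
    unfolding Hn_def ex e1 using b ab q by (simp add: ln_div times_divide_eq_right[symmetric] del: times_divide_eq_right) simp
  have l2: "ln (2::real) \<noteq> 0" by simp
  have hw: "(a + b) * ((ln a - ln b) * (a / (a + b))) = a * (ln a - ln b)" using ab by simp
  have K2: "Kf a b = (a + b)/2 + (a * ln a + b * ln b - (a + b) * ln (a + b)) / (2 * ln 2)"
    unfolding K using l2 by (simp add: field_simps)
  have R2: "((a + b) / 2) * (1 - Hn (ln a - ln b) / ln 2) = (a + b)/2 - ((a + b) * Hn (ln a - ln b)) / (2 * ln 2)"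
    using l2 by (simp add: field_simps)
  have R3: "(a + b) * Hn (ln a - ln b) = (a + b) * ln (a + b) - (a + b) * ln b - a * (ln a - ln b)"
    unfolding H right_diff_distrib hw by simp
  have "(a + b) * ln (a + b) - (a + b) * ln b - a * (ln a - ln b) = - (a * ln a + b * ln b - (a + b) * ln (a + b))"
    by (simp add: algebra_simps)
  then show ?thesis unfolding K2 R2 R3 by (simp only: minus_divide_left[symmetric] diff_minus_eq_add)
qed

lemma Tf_zero: assumes a: "a > 0" and r: "r \<ge> 0" shows "Tf r a 0 = (a/2) * 2 powr (-r)"
proof -
  have "a powr (1/(1+r)) > 0" using a by simp
  then have "(1/2 * (a powr (1/(1+r)) + 0 powr (1/(1+r))) / a powr (1/(1+r))) = 1/2" by simp
  moreover have h2: "(1/2::real) powr r = 2 powr (-r)" by (simp add: powr_divide powr_minus_divide)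
  ultimately show ?thesis unfolding Tf_def using a by simp
qed

lemma Kf_zero: assumes a: "a > 0" shows "Kf a 0 = a/2"
proof -
  have "a / (1/2 * (a + 0)) = 2" using a by simp
  then show ?thesis unfolding Kf_def using a by simp
qed

lemma chan_y_ord:
  assumes a: "a \<ge> 0" and b: "b \<ge> 0" and ab: "b \<le> a" and r: "r \<ge> 0" and x0: "x0 \<ge> 0"
  shows "0 \<le> Kf a b \<and> Kf a b \<le> (a+b)/2 \<and>
    ((a+b)/2 - Kf a b) + Kf a b * 2 powr (-r) \<le> Tf r a b \<and>
    Tf r a b \<le> (a+b)/2 * (2 powr (-r) * (Gf r x0 - Lam r x0 * Hn x0)) + 2 powr (-r) * Lam r x0 * ln 2 * ((a+b)/2 - Kf a b) \<and>
    (Kf a b = (a+b)/2 \<longrightarrow> Tf r a b = (a+b)/2 * 2 powr (-r))"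
proof (cases "b = 0")
  case b0: True
  show ?thesis
  proof (cases "a = 0")
    case True then show ?thesis using b0 by (simp add: Tf_def Kf_def)
  next
    case False
    then have ap: "a > 0" using a by simp
    have t: "1 \<le> Gf r x0 - Lam r x0 * Hn x0" by (rule tangent_inf[OF r x0])
    have "a/2 * 2 powr (-r) * 1 \<le> a/2 * 2 powr (-r) * (Gf r x0 - Lam r x0 * Hn x0)"
      using ap by (intro mult_left_mono[OF t]) auto
    then show ?thesis using b0 ap by (simp add: Tf_zero[OF ap r] Kf_zero[OF ap] algebra_simps)
  qed
next
  case False
  then have bp: "b > 0" using b by simp
  then have ap: "a > 0" using ab by simp
  define x where "x = ln a - ln b"
  have x: "x \<ge> 0" unfolding x_def using ab bp by simp
  define w where "w = (a + b) / 2"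
  have w: "w > 0" unfolding w_def using ap bp by simp
  note pu = per_unit[OF r x x0]
  define h where "h = Hn x / ln 2"
  have K: "Kf a b = w * (1 - h)" unfolding Kf_pos[OF ap bp] w_def h_def x_def ..
  have T: "Tf r a b = w * (2 powr (-r) * Gf r x)" unfolding Tf_pos[OF ap bp r] w_def x_def by simp
  have h0: "0 < h" "h \<le> 1" using pu(1,2) unfolding h_def by auto
  have i1: "w * (h + (1 - h) * 2 powr (-r)) \<le> w * (2 powr (-r) * Gf r x)"
    using pu(3) w unfolding h_def by (intro mult_left_mono) auto
  have i2: "w * (2 powr (-r) * Gf r x) \<le> w * (2 powr (-r) * (Gf r x0 - Lam r x0 * Hn x0) + 2 powr (-r) * Lam r x0 * ln 2 * h)"
    using pu(4) w unfolding h_def by (intro mult_left_mono) auto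
  have "Kf a b \<noteq> w" unfolding K using h0 w by simp
  then show ?thesis unfolding K T w_def[symmetric]
    using h0 w i1 i2 by (auto simp: algebra_simps)
qed

lemma chan_y:
  assumes a: "a \<ge> 0" and b: "b \<ge> 0" and r: "r \<ge> 0" and x0: "x0 \<ge> 0"
  shows "0 \<le> Kf a b \<and> Kf a b \<le> (a+b)/2 \<and>
    ((a+b)/2 - Kf a b) + Kf a b * 2 powr (-r) \<le> Tf r a b \<and>
    Tf r a b \<le> (a+b)/2 * (2 powr (-r) * (Gf r x0 - Lam r x0 * Hn x0)) + 2 powr (-r) * Lam r x0 * ln 2 * ((a+b)/2 - Kf a b) \<and>
    (Kf a b = (a+b)/2 \<longrightarrow> Tf r a b = (a+b)/2 * 2 powr (-r))"
proof (cases "b \<le> a")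
  case True then show ?thesis using chan_y_ord[OF a b True r x0] by simp
next
  case False
  then have "a \<le> b" by simp
  from chan_y_ord[OF b a this r x0] show ?thesis by (simp add: Tf_sym[of r b a] Kf_sym[of b a] add.commute)
qed

lemma sum_filter_UNIV: "(\<Sum>y\<in>{y::'y::finite. P y}. g y) = (\<Sum>y\<in>UNIV. if P y then g y else 0)"
  by (simp add: sum.If_cases)

lemma bool_sum: "(\<Sum>x\<in>(UNIV::bool set). f x) = f False + f True"
  by (simp add: UNIV_bool)

lemma F_sum: "gallager_F W r = (\<Sum>y\<in>UNIV. Tf r (W False y) (W True y))"
  unfolding gallager_F_def Tf_def sum_filter_UNIV bool_sum
  by (simp add: sum_distrib_left sum.distrib algebra_simps)

lemma C_sum: "capacity W = (\<Sum>y\<in>UNIV. Kf (W False y) (W True y))"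
  unfolding capacity_def Kf_def sum_filter_UNIV bool_sum
  by (simp add: sum_distrib_left sum.distrib algebra_simps)

lemma w_sum: assumes "stochastic_channel W" shows "(\<Sum>y\<in>UNIV. (W False y + W True y)/2) = 1"
  using assms unfolding stochastic_channel_def
  by (simp add: sum.distrib sum_divide_distrib[symmetric])

lemma aggregate:
  assumes W: "stochastic_channel W" and r: "r \<ge> 0"
  shows "0 \<le> capacity W" "capacity W \<le> 1"
    "F_bec r (capacity W) \<le> gallager_F W r"
    "x0 \<ge> 0 \<Longrightarrow> gallager_F W r \<le> 2 powr (-r) * (Gf r x0 - Lam r x0 * Hn x0) + 2 powr (-r) * Lam r x0 * ln 2 * (1 - capacity W)"
    "capacity W = 1 \<Longrightarrow> gallager_F W r = 2 powr (-r)"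
proof -
  have nn: "W x y \<ge> 0" for x y using W unfolding stochastic_channel_def by auto
  define a where "a y = W False y" for y
  define b where "b y = W True y" for y
  have ws: "(\<Sum>y\<in>UNIV. (a y + b y)/2) = 1" using w_sum[OF W] unfolding a_def b_def .
  have cy0: "\<And>y. 0 \<le> Kf (a y) (b y) \<and> Kf (a y) (b y) \<le> (a y + b y)/2 \<and>
    ((a y + b y)/2 - Kf (a y) (b y)) + Kf (a y) (b y) * 2 powr (-r) \<le> Tf r (a y) (b y) \<and>
    (Kf (a y) (b y) = (a y + b y)/2 \<longrightarrow> Tf r (a y) (b y) = (a y + b y)/2 * 2 powr (-r))"
    using chan_y[OF nn nn r order_refl] unfolding a_def b_def by blast
  have ws2: "(\<Sum>y\<in>UNIV. (a y + b y)/2 * c) = c" for c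
    using ws by (simp only: sum_distrib_right[symmetric])
  have C: "capacity W = (\<Sum>y\<in>UNIV. Kf (a y) (b y))" unfolding C_sum a_def b_def ..
  have F: "gallager_F W r = (\<Sum>y\<in>UNIV. Tf r (a y) (b y))" unfolding F_sum a_def b_def ..
  show "0 \<le> capacity W" unfolding C using cy0 by (intro sum_nonneg) auto
  have "capacity W \<le> (\<Sum>y\<in>UNIV. (a y + b y)/2)" unfolding C using cy0 by (intro sum_mono) auto
  then show "capacity W \<le> 1" using ws by simp
  have "F_bec r (capacity W) = (\<Sum>y\<in>UNIV. ((a y + b y)/2 - Kf (a y) (b y)) + Kf (a y) (b y) * 2 powr (-r))"
    unfolding F_bec_def C using ws by (simp add: sum.distrib sum_subtractf sum_distrib_right[symmetric] algebra_simps)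
  also have "\<dots> \<le> gallager_F W r" unfolding F using cy0 by (intro sum_mono) auto
  finally show "F_bec r (capacity W) \<le> gallager_F W r" .
  {
    assume x0: "x0 \<ge> 0"
    have cy1: "\<And>y. Tf r (a y) (b y) \<le> (a y + b y)/2 * (2 powr (-r) * (Gf r x0 - Lam r x0 * Hn x0)) + 2 powr (-r) * Lam r x0 * ln 2 * ((a y + b y)/2 - Kf (a y) (b y))"
      using chan_y[OF nn nn r x0] unfolding a_def b_def by blast
    have "gallager_F W r \<le> (\<Sum>y\<in>UNIV. (a y + b y)/2 * (2 powr (-r) * (Gf r x0 - Lam r x0 * Hn x0)) + 2 powr (-r) * Lam r x0 * ln 2 * ((a y + b y)/2 - Kf (a y) (b y)))"
      unfolding F by (intro sum_mono cy1)
    also have "\<dots> = 2 powr (-r) * (Gf r x0 - Lam r x0 * Hn x0) + 2 powr (-r) * Lam r x0 * ln 2 * (1 - capacity W)"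
      unfolding C sum.distrib ws2 sum_distrib_left[symmetric] using ws by (simp add: sum_subtractf)
    finally show "gallager_F W r \<le> 2 powr (-r) * (Gf r x0 - Lam r x0 * Hn x0) + 2 powr (-r) * Lam r x0 * ln 2 * (1 - capacity W)" .
  }
  assume C1: "capacity W = 1"
  have "(\<Sum>y\<in>UNIV. (a y + b y)/2 - Kf (a y) (b y)) = 0"
    using ws C1 unfolding C by (simp add: sum_subtractf)
  then have "\<forall>y\<in>UNIV. (a y + b y)/2 - Kf (a y) (b y) = 0"
    using cy0 by (subst sum_nonneg_eq_0_iff[symmetric]) auto
  then have T1: "\<And>y. Tf r (a y) (b y) = (a y + b y)/2 * 2 powr (-r)" using cy0 by auto
  show "gallager_F W r = 2 powr (-r)" unfolding F T1 ws2 ..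
qed

lemma be_alt: "bin_entropy p = (- p * ln p - (1-p) * ln (1-p)) / ln 2"
  unfolding bin_entropy_def log_def by (simp add: diff_divide_distrib)

lemma be_Hn: "bin_entropy (1/(1+exp y)) = Hn y / ln 2"
proof -
  define e where "e = exp y"
  have e0: "e > 0" unfolding e_def by simp
  have l1: "ln (1/(1+e)) = - ln (1+e)" using e0 by (simp add: ln_div)
  have om: "1 - 1/(1+e) = e/(1+e)" using e0 by (simp add: field_simps)
  have l2: "ln (e/(1+e)) = y - ln (1+e)" using e0 by (simp add: ln_div e_def)
  have "- (1/(1+e)) * ln (1/(1+e)) - (1 - 1/(1+e)) * ln (1 - 1/(1+e))
      = 1/(1+e) * ln (1+e) - e/(1+e) * (y - ln (1+e))"
    unfolding om l1 l2 by simp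
  also have "\<dots> = ((1/(1+e) + e/(1+e)) * ln (1+e)) - y * e/(1+e)"
    by (simp add: algebra_simps)
  also have "1/(1+e) + e/(1+e) = 1" using e0 by (simp add: add_divide_distrib[symmetric])
  finally have "- (1/(1+e)) * ln (1/(1+e)) - (1 - 1/(1+e)) * ln (1 - 1/(1+e)) = Hn y"
    unfolding Hn_def e_def by simp
  then show ?thesis unfolding be_alt e_def by simp
qed

lemma be_0: "bin_entropy 0 = 0" unfolding bin_entropy_def by simp

lemma Hn_strict: assumes "0 \<le> u" "u < v" shows "Hn v < Hn u"
proof -
  obtain z where z: "u < z" "z < v" "Hn v - Hn u = (v - u) * (- z * exp z / (1 + exp z)^2)"
    using MVT2[OF assms(2), of Hn "\<lambda>t. - t * exp t / (1 + exp t)^2"] deriv_Hn by blast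
  have "(v - u) * (- z * exp z / (1 + exp z)^2) < 0"
    using z assms by (intro mult_pos_neg) (auto intro!: divide_pos_pos)
  then show ?thesis using z by simp
qed

lemma p_repr: fixes p :: real assumes "0 < p" "p \<le> 1/2" shows "\<exists>y\<ge>0. p = 1/(1+exp y)"
proof -
  define y where "y = ln ((1-p)/p)"
  have q: "(1-p)/p \<ge> 1" using assms by (simp add: field_simps)
  then have "y \<ge> 0" unfolding y_def by simp
  moreover have "exp y = (1-p)/p" unfolding y_def using q by simp
  then have "1/(1+exp y) = p" using assms by (simp add: field_simps)
  ultimately show ?thesis by auto
qed

lemma be_inv: assumes x0: "x0 \<ge> 0" shows "bin_entropy_inv (Hn x0 / ln 2) = 1/(1+exp x0)"
  unfolding bin_entropy_inv_def
proof (rule the_equality)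
  have "1 + exp x0 \<ge> 2" using x0 by simp
  then show "1/(1+exp x0) \<in> {0..1/2} \<and> bin_entropy (1/(1+exp x0)) = Hn x0 / ln 2"
    by (simp add: be_Hn field_simps)
next
  fix p assume p: "p \<in> {0..1/2} \<and> bin_entropy p = Hn x0 / ln 2"
  have H0: "Hn x0 / ln 2 > 0" using Hn_pos[OF x0] by simp
  show "p = 1/(1+exp x0)"
  proof (cases "p = 0")
    case True then show ?thesis using p H0 be_0 by simp
  next
    case False
    then obtain y where y: "y \<ge> 0" "p = 1/(1+exp y)" using p_repr[of p] p by auto
    then have "Hn y = Hn x0" using p by (simp add: be_Hn)
    then have "y = x0" using Hn_strict[OF y(1), of x0] Hn_strict[OF x0, of y] by (cases "y < x0"; cases "x0 < y") auto
    then show ?thesis using y by simp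
  qed
qed

lemma be_inv0: "bin_entropy_inv 0 = 0"
  unfolding bin_entropy_inv_def
proof (rule the_equality)
  show "(0::real) \<in> {0..1/2} \<and> bin_entropy 0 = 0" by (simp add: be_0)
next
  fix p :: real assume p: "p \<in> {0..1/2} \<and> bin_entropy p = 0"
  show "p = 0"
  proof (rule ccontr)
    assume "p \<noteq> 0"
    then obtain y where y: "y \<ge> 0" "p = 1/(1+exp y)" using p_repr[of p] p by auto
    then have "Hn y / ln 2 = 0" using p by (simp add: be_Hn)
    then show False using Hn_pos[OF y(1)] by simp
  qed
qed

lemma Hn_cont: "continuous_on S Hn"
  using deriv_Hn by (intro continuous_at_imp_continuous_on ballI DERIV_isCont) blast

lemma Hn_surj: assumes "0 < v" "v \<le> ln 2" shows "\<exists>x0\<ge>0. Hn x0 = v"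
proof -
  have "eventually (\<lambda>x. Hn x < v) at_top" using order_tendstoD(2)[OF Hn_lim assms(1)] .
  then have "eventually (\<lambda>x. Hn x < v \<and> x \<ge> 0) at_top"
    using eventually_ge_at_top[of 0] by eventually_elim auto
  then obtain N where N: "\<forall>n\<ge>N. Hn n < v \<and> 0 \<le> n" by (auto simp: eventually_at_top_linorder)
  then have X: "Hn N < v" "N \<ge> 0" by auto
  have "\<exists>x. 0 \<le> x \<and> x \<le> N \<and> Hn x = v"
    by (rule IVT2') (use X assms Hn_0 Hn_cont in auto)
  then show ?thesis by auto
qed

lemma F_bsc_eq: assumes r: "r \<ge> 0" and x0: "x0 \<ge> 0" and C: "1 - C = Hn x0 / ln 2"
  shows "F_bsc r C = 2 powr (-r) * Gf r x0"
proof -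
  define e where "e = exp x0"
  define s where "s = 1/(1+r)"
  define E where "E = exp (x0/(1+r))"
  have e0: "e > 0" unfolding e_def by simp
  have eps: "bin_entropy_inv (1 - C) = 1/(1+e)" unfolding C e_def by (rule be_inv[OF x0])
  have om: "1 - 1/(1+e) = e/(1+e)" using e0 by (simp add: field_simps)
  have p1: "(1/(1+e)) powr s = 1 / (1+e) powr s" using e0 by (simp add: powr_divide)
  have eE: "e powr s = E" unfolding e_def E_def s_def by (simp add: powr_def)
  have p2: "(e/(1+e)) powr s = E / (1+e) powr s" using e0
    by (simp add: powr_divide eE)
  have "(1/(1+e)) powr s + (e/(1+e)) powr s = (1 + E) / (1+e) powr s"
    unfolding p1 p2 by (simp add: add_divide_distrib)
  then have "((1/(1+e)) powr s + (e/(1+e)) powr s) powr (1+r) = (1+E) powr (1+r) / ((1+e) powr s) powr (1+r)"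
    using e0 by (simp add: powr_divide E_def add_pos_pos)
  also have "((1+e) powr s) powr (1+r) = 1 + e" using e0 r unfolding s_def by (simp add: powr_powr)
  finally have q: "((1/(1+e)) powr s + (e/(1+e)) powr s) powr (1+r) = (1+E) powr (1+r) / (1 + e)" .
  have G: "Gf r x0 = (1 + E) powr (1+r) / (1 + e)"
    unfolding Gf_def E_def e_def by (simp add: powr_def add_pos_pos)
  show ?thesis unfolding F_bsc_def Let_def eps om G using q by (simp add: s_def)
qed

lemma F_bsc_1: "F_bsc r 1 = 2 powr (-r)"
  unfolding F_bsc_def Let_def by (simp add: be_inv0)

lemma key_bounds:
  assumes W: "stochastic_channel W" and r: "0 \<le> r"
  shows "2 powr (-r) \<le> F_bec r (capacity W)"
    "F_bec r (capacity W) \<le> gallager_F W r"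
    "gallager_F W r \<le> F_bsc r (capacity W)"
proof -
  define C where "C = capacity W"
  note ag = aggregate[OF W r]
  have C0: "0 \<le> C" "C \<le> 1" using ag(1,2) unfolding C_def by auto
  have p1: "2 powr (-r) \<le> (1::real)" using powr_mono[of "-r" 0 "2::real"] r by simp
  have "(1 - 2 powr (-r)) * C \<le> (1 - 2 powr (-r)) * 1" using p1 C0 by (intro mult_left_mono) auto
  then show "2 powr (-r) \<le> F_bec r (capacity W)" unfolding F_bec_def C_def[symmetric] by (simp add: algebra_simps)
  show "F_bec r (capacity W) \<le> gallager_F W r" by (rule ag(3))
  show "gallager_F W r \<le> F_bsc r (capacity W)"
  proof (cases "C = 1")
    case True
    then show ?thesis using ag(5) F_bsc_1 unfolding C_def by simp
  next
    case False
    then have "0 < ln 2 * (1 - C)" "ln 2 * (1 - C) \<le> ln 2" using C0 by auto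
    then obtain x0 where x0: "x0 \<ge> 0" "Hn x0 = ln 2 * (1 - C)" using Hn_surj by blast
    have "1 - C = Hn x0 / ln 2" using x0 by simp
    then have Fb: "F_bsc r C = 2 powr (-r) * Gf r x0" by (rule F_bsc_eq[OF r x0(1)])
    have "gallager_F W r \<le> 2 powr (-r) * (Gf r x0 - Lam r x0 * Hn x0) + 2 powr (-r) * Lam r x0 * ln 2 * (1 - C)"
      using ag(4)[OF x0(1)] unfolding C_def .
    also have "\<dots> = 2 powr (-r) * Gf r x0" unfolding x0(2) by (simp add: algebra_simps)
    finally show ?thesis using Fb unfolding C_def by simp
  qed
qed

theorem mainTheorem8:
  fixes W :: "bool \<Rightarrow> 'y::finite \<Rightarrow> real" and R :: real
  assumes "bims W" and "R \<ge> 0"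
  shows "Er_bsc R (capacity W) \<le> Er W R \<and> Er W R \<le> Er_bec R (capacity W)"
proof -
  have W: "stochastic_channel W" using assms(1) unfolding bims_def by simp
  define C where "C = capacity W"
  note kb = key_bounds[OF W]
  have Fpos: "0 < F_bec r C \<and> 0 < gallager_F W r \<and> 0 < F_bsc r C" if "r \<in> {0..1}" for r
  proof -
    have p: "0 < (2::real) powr (-r)" by simp
    have "0 \<le> r" using that by simp
    from kb[OF this] p show ?thesis unfolding C_def[symmetric] by linarith
  qed
  have ub1: "- log 2 (F_bec r C) \<le> 1" if "r \<in> {0..1}" for r
  proof -
    have "log 2 (2 powr (-r)) \<le> log 2 (F_bec r C)"
      using kb(1)[of r] that unfolding C_def[symmetric] by (intro log_mono) auto
    then show ?thesis using that by simp
  qed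
  have E0le: "E0 W r \<le> - log 2 (F_bec r C)" if "r \<in> {0..1}" for r
    unfolding E0_def using kb(2)[of r] Fpos[OF that] that unfolding C_def[symmetric] by simp
  have E0ge: "- log 2 (F_bsc r C) \<le> E0 W r" if "r \<in> {0..1}" for r
    unfolding E0_def using kb(3)[of r] Fpos[OF that] that unfolding C_def[symmetric] by simp
  have bdd1: "bdd_above ((\<lambda>r. E0 W r - r * R) ` {0..1})"
  proof (rule bdd_aboveI2)
    fix r :: real assume r: "r \<in> {0..1}"
    then have "r * R \<ge> 0" using assms(2) by simp
    then show "E0 W r - r * R \<le> 1" using E0le[OF r] ub1[OF r] by linarith
  qed
  have bdd2: "bdd_above ((\<lambda>r. - log 2 (F_bec r C) - r * R) ` {0..1})"
  proof (rule bdd_aboveI2)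
    fix r :: real assume r: "r \<in> {0..1}"
    then have "r * R \<ge> 0" using assms(2) by simp
    then show "- log 2 (F_bec r C) - r * R \<le> 1" using ub1[OF r] by linarith
  qed
  have "Er_bsc R C \<le> Er W R"
    unfolding Er_bsc_def Er_def
  proof (rule cSUP_mono[OF _ bdd1])
    fix n :: real assume n: "n \<in> {0..1}"
    show "\<exists>m\<in>{0..1}. - log 2 (F_bsc n C) - n * R \<le> E0 W m - m * R"
      using E0ge[OF n] n by (intro bexI[of _ n]) auto
  qed auto
  moreover have "Er W R \<le> Er_bec R C"
    unfolding Er_bec_def Er_def
  proof (rule cSUP_mono[OF _ bdd2])
    fix n :: real assume n: "n \<in> {0..1}"
    show "\<exists>m\<in>{0..1}. E0 W n - n * R \<le> - log 2 (F_bec m C) - m * R"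
      using E0le[OF n] n by (intro bexI[of _ n]) auto
  qed auto
  ultimately show ?thesis unfolding C_def by simp
qed

end
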